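(* Let $p$ be the density of the centred Gaussian $\mathcal N(0,\Sigma)$ on $\mathbb{R}^d$ with $\Sigma$ positive definite. Let $\tau>0$, $y\in\mathbb{R}^d$, and define $x_0=y$ and $x_{k+1}=\alpha_k\,\mathrm{MMSE}_{\sigma_k}(x_k)+(1-\alpha_k)y$ with $\alpha_k=\frac{k+1}{k+2}$, $\sigma_k^2=\frac{\tau}{k+1}$. Then for all $k\ge0$, $$x_k-\mathrm{prox}_{-\tau\ln p}(y)=\frac{y-\mathrm{prox}_{-\tau\ln p}(y)}{k+1}.$$
   Context: For $\sigma>0$, $\mathrm{MMSE}_\sigma(z):=\mathbb{E}[X\mid X+\sigma\varepsilon=z]$ where $X\sim p$ and $\varepsilon\sim\mathcal N(0,I_d)$ are independent. $\mathrm{prox}_{-\tau\ln p}(y):=\arg\min_x\{\tfrac12\|y-x\|^2-\tau\ln p(x)\}$, which here equals $(I+\tau\Sigma^{-1})^{-1}y$. *)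

theory Defs
  imports "HOL-Analysis.Analysis"
begin

definition pos_def :: "real^'n^'n \<Rightarrow> bool" where
  "pos_def S \<longleftrightarrow> transpose S = S \<and> (\<forall>v. v \<noteq> 0 \<longrightarrow> v \<bullet> (S *v v) > 0)"

definition gauss_density :: "real^'n^'n \<Rightarrow> real^'n \<Rightarrow> real" where
  "gauss_density S x =
     exp (- (x \<bullet> (matrix_inv S *v x)) / 2)
     / sqrt ((2 * pi) ^ CARD('n) * det S)"

definition noise_density :: "real \<Rightarrow> real^'n \<Rightarrow> real" where
  "noise_density sg w =
     exp (- (norm w ^ 2 / (2 * sg ^ 2))) / sqrt ((2 * pi * sg ^ 2) ^ CARD('n))"

text \<open>MMSE denoiser E[X | X + sigma eps = z] for X with density p, given by the
  Bayes formula (posterior mean).\<close>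
definition MMSE :: "(real^'n \<Rightarrow> real) \<Rightarrow> real \<Rightarrow> real^'n \<Rightarrow> real^'n" where
  "MMSE p sg z =
     (1 / (\<integral>x. p x * noise_density sg (z - x) \<partial>lborel)) *\<^sub>R
     (\<integral>x. (p x * noise_density sg (z - x)) *\<^sub>R x \<partial>lborel)"

definition prox_neg_log :: "real \<Rightarrow> (real^'n \<Rightarrow> real) \<Rightarrow> real^'n \<Rightarrow> real^'n" where
  "prox_neg_log \<tau> p y =
     (THE x. \<forall>x'. (norm (y - x))^2 / 2 - \<tau> * ln (p x) \<le> (norm (y - x'))^2 / 2 - \<tau> * ln (p x'))"

end

theory Submission
  imports Defs "HOL-Probability.Probability"
begin

lemma integrable_prod_h:
  fixes s :: real assumes "s > 0"
  shows "integrable lborel (\<lambda>u::'a::euclidean_space. \<Prod>b\<in>Basis. normal_density 0 s (u \<bullet> b) * (1 + \<bar>u \<bullet> b\<bar>))"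
proof (rule integrableI_nonneg)
  let ?h = "\<lambda>t. normal_density 0 s t * (1 + \<bar>t\<bar>)"
  have hint: "integrable lborel ?h"
  proof -
    have "integrable lborel (\<lambda>t. normal_density 0 s t + normal_density 0 s t * \<bar>t - 0\<bar> ^ 1)"
      using assms by (intro Bochner_Integration.integrable_add integrable_normal_density integrable_normal_moment_abs)
    then show ?thesis by (simp add: algebra_simps)
  qed
  have hnn: "\<And>t. 0 \<le> ?h t" by (simp add: normal_density_nonneg)
  show "(\<lambda>u::'a. \<Prod>b\<in>Basis. ?h (u \<bullet> b)) \<in> borel_measurable lborel" by measurable
  show "AE x in lborel. 0 \<le> (\<Prod>b\<in>Basis. ?h (x \<bullet> b))" by (simp add: prod_nonneg hnn)
  have "(\<integral>\<^sup>+u. ennreal (\<Prod>b\<in>Basis. ?h (u \<bullet> b)) \<partial>(lborel::'a measure))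
      = (\<integral>\<^sup>+u. (\<Prod>b\<in>Basis. ennreal (?h ((u::'a) \<bullet> b))) \<partial>lborel)"
    by (simp add: prod_ennreal hnn)
  also have "\<dots> = (\<Prod>b\<in>(Basis::'a set). (\<integral>\<^sup>+t. ennreal (?h t) \<partial>lborel))"
    by (rule nn_integral_lborel_prod) auto
  also have "\<dots> < \<infinity>"
  proof -
    have "(\<integral>\<^sup>+t. ennreal (?h t) \<partial>lborel) < \<infinity>"
      using hint by (simp add: integrable_iff_bounded hnn)
    then show ?thesis by (simp add: less_top[symmetric] ennreal_prod_eq_top power_eq_top_ennreal)
  qed
  finally show "(\<integral>\<^sup>+u. ennreal (\<Prod>b\<in>Basis. ?h (u \<bullet> b)) \<partial>(lborel::'a measure)) < \<infinity>" .
qed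

lemma prod_normal_density:
  fixes u :: "'a::euclidean_space" assumes "s > 0"
  shows "(\<Prod>b\<in>Basis. normal_density 0 s (u \<bullet> b))
       = exp (- (norm u ^ 2) / (2 * s^2)) / sqrt (2 * pi * s^2) ^ DIM('a)"
proof -
  have n2: "norm u ^ 2 = (\<Sum>b\<in>Basis. (u \<bullet> b)^2)"
    unfolding power2_norm_eq_inner by (subst euclidean_inner) (simp add: power2_eq_square)
  have "(\<Prod>b\<in>Basis. normal_density 0 s (u \<bullet> b))
      = (\<Prod>b\<in>(Basis::'a set). 1 / sqrt (2 * pi * s^2)) * (\<Prod>b\<in>Basis. exp (- ((u \<bullet> b)^2) / (2 * s^2)))"
    unfolding prod.distrib[symmetric] by (rule prod.cong) (simp_all add: normal_density_def)
  also have "(\<Prod>b\<in>(Basis::'a set). exp (- ((u \<bullet> b)^2) / (2 * s^2))) = exp (\<Sum>b\<in>Basis. - ((u \<bullet> b)^2) / (2 * s^2))"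
    by (simp add: exp_sum)
  also have "(\<Sum>b\<in>(Basis::'a set). - ((u \<bullet> b)^2) / (2 * s^2)) = - (norm u ^ 2) / (2 * s^2)"
    by (simp add: n2 sum_negf sum_divide_distrib)
  finally show ?thesis by (simp add: power_one_over)
qed

lemma gauss_bound_integrable:
  fixes G :: "'a::euclidean_space \<Rightarrow> real"
  assumes s0: "s > 0" and Gm: "G \<in> borel_measurable borel" and G0: "\<And>u. 0 \<le> G u"
    and Gb: "\<And>u. G u \<le> exp (- (norm u ^ 2) / (2 * s^2))"
  shows "integrable lborel G" "integrable lborel (\<lambda>u. G u *\<^sub>R u)"
proof -
  define C where "C = sqrt (2 * pi * s^2) ^ DIM('a)"
  have C0: "C > 0" using s0 by (simp add: C_def)
  let ?P = "\<lambda>u::'a. \<Prod>b\<in>Basis. normal_density 0 s (u \<bullet> b) * (1 + \<bar>u \<bullet> b\<bar>)"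
  have I: "integrable lborel (\<lambda>u. C * ?P u)"
    using integrable_prod_h[OF s0, where 'a='a] by simp
  have key: "exp (- (norm u ^ 2) / (2 * s^2)) * max 1 (norm u) \<le> C * ?P u" for u :: 'a
  proof -
    have "?P u = (\<Prod>b\<in>Basis. normal_density 0 s (u \<bullet> b)) * (\<Prod>b\<in>Basis. (1 + \<bar>u \<bullet> b\<bar>))"
      by (simp add: prod.distrib)
    also have "\<dots> = exp (- (norm u ^ 2) / (2 * s^2)) / C * (\<Prod>b\<in>Basis. (1 + \<bar>u \<bullet> b\<bar>))"
      using prod_normal_density[OF s0, of u] by (simp add: C_def)
    finally have eq: "C * ?P u = exp (- (norm u ^ 2) / (2 * s^2)) * (\<Prod>b\<in>Basis. (1 + \<bar>u \<bullet> b\<bar>))"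
      using C0 by simp
    have m1: "1 \<le> (\<Prod>b\<in>(Basis::'a set). (1 + \<bar>u \<bullet> b\<bar>))"
      by (rule prod_ge_1) simp
    have m2: "norm u \<le> (\<Prod>b\<in>(Basis::'a set). (1 + \<bar>u \<bullet> b\<bar>))"
      using norm_le_l1[of u] sum_le_prod[of Basis "\<lambda>b. \<bar>u \<bullet> b\<bar>"] by simp
    show ?thesis unfolding eq
      by (rule mult_left_mono) (use m1 m2 in auto)
  qed
  show "integrable lborel G"
  proof (rule Bochner_Integration.integrable_bound[OF I])
    show "G \<in> borel_measurable lborel" using Gm by measurable
    show "AE x in lborel. norm (G x) \<le> norm (C * ?P x)"
    proof (intro AE_I2)
      fix x :: 'a
      have "norm (G x) = G x" using G0[of x] by simp
      also have "\<dots> \<le> exp (- (norm x ^ 2) / (2 * s^2))" by (rule Gb)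
      also have "\<dots> \<le> exp (- (norm x ^ 2) / (2 * s^2)) * max 1 (norm x)"
        using mult_left_mono[of 1 "max 1 (norm x)" "exp (- (norm x ^ 2) / (2 * s^2))"] by simp
      also have "\<dots> \<le> C * ?P x" by (rule key)
      also have "\<dots> \<le> norm (C * ?P x)" by simp
      finally show "norm (G x) \<le> norm (C * ?P x)" .
    qed
  qed
  show "integrable lborel (\<lambda>u. G u *\<^sub>R u)"
  proof (rule Bochner_Integration.integrable_bound[OF I])
    show "(\<lambda>u. G u *\<^sub>R u) \<in> borel_measurable lborel" using Gm by measurable
    show "AE x in lborel. norm (G x *\<^sub>R x) \<le> norm (C * ?P x)"
    proof (intro AE_I2)
      fix x :: 'a
      have "norm (G x *\<^sub>R x) = G x * norm x" using G0[of x] by simp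
      also have "\<dots> \<le> exp (- (norm x ^ 2) / (2 * s^2)) * max 1 (norm x)"
        by (intro mult_mono Gb) auto
      also have "\<dots> \<le> C * ?P x" by (rule key)
      also have "\<dots> \<le> norm (C * ?P x)" by simp
      finally show "norm (G x *\<^sub>R x) \<le> norm (C * ?P x)" .
    qed
  qed
qed



lemma scaleR_matrix_vector_mult:
  fixes A :: "real^'m^'n"
  shows "(c *\<^sub>R A) *v v = c *\<^sub>R (A *v v)"
  by (simp add: vec_eq_iff matrix_vector_mult_def sum_distrib_left algebra_simps)

lemma posdef_det_nz:
  fixes M :: "real^'n^'n"
  assumes "\<And>v. v \<noteq> 0 \<Longrightarrow> v \<bullet> (M *v v) > 0"
  shows "det M \<noteq> 0"
proof -
  have "inj ((*v) M)"
  proof (rule injI)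
    fix x y assume "M *v x = M *v y"
    then have "M *v (x - y) = 0" by (simp add: matrix_vector_mult_diff_distrib)
    then have "\<not> (x - y \<noteq> 0)" using assms[of "x - y"] by auto
    then show "x = y" by simp
  qed
  then show ?thesis using det_nz_iff_inj[of "(*v) M"] by (simp add: matrix_of_matrix_vector_mul)
qed

lemma posdef_det_pos:
  fixes S :: "real^'n^'n"
  assumes "\<And>v. v \<noteq> 0 \<Longrightarrow> v \<bullet> (S *v v) > 0"
  shows "det S > 0"
proof (rule ccontr)
  assume "\<not> det S > 0"
  define M where "M t = t *\<^sub>R S + (1 - t) *\<^sub>R (mat 1 :: real^'n^'n)" for t :: real
  have Mv: "M t *v v = t *\<^sub>R (S *v v) + (1 - t) *\<^sub>R v" for t v
    by (simp add: M_def matrix_vector_mult_add_rdistrib scaleR_matrix_vector_mult)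
  have cont: "continuous_on {0..1} (\<lambda>t. det (M t))"
    unfolding det_def M_def by (intro continuous_intros) 
  have "\<exists>t. 0 \<le> t \<and> t \<le> 1 \<and> det (M t) = 0"
    by (rule IVT2') (use \<open>\<not> det S > 0\<close> cont in \<open>auto simp: M_def\<close>)
  then obtain t where t: "0 \<le> t" "t \<le> 1" "det (M t) = 0" by blast
  have "det (M t) \<noteq> 0"
  proof (rule posdef_det_nz)
    fix v :: "real^'n" assume v: "v \<noteq> 0"
    have "v \<bullet> (M t *v v) = t * (v \<bullet> (S *v v)) + (1 - t) * (v \<bullet> v)"
      by (simp add: Mv inner_add_right)
    moreover have "v \<bullet> (S *v v) > 0" using assms v by blast
    moreover have "v \<bullet> v > 0" using v by simp
    ultimately show "v \<bullet> (M t *v v) > 0" using t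
      by (smt (verit) mult_nonneg_nonneg mult_pos_pos)
  qed
  with t show False by simp
qed


lemma lborel_affine1:
  fixes t :: "'a::euclidean_space"
  assumes c: "c = 1 \<or> c = -1"
  shows "distr lborel borel (\<lambda>x. t + c *\<^sub>R x) = (lborel :: 'a measure)"
proof -
  have "c \<noteq> 0" using c by auto
  from lborel_affine[OF this, of t] c show ?thesis by (auto simp: density_1)
qed

lemma integral_lborel_affine1:
  fixes f :: "'a::euclidean_space \<Rightarrow> 'b::{banach,second_countable_topology}"
  assumes f: "f \<in> borel_measurable borel" and c: "c = 1 \<or> c = -1"
  shows "(\<integral>x. f x \<partial>lborel) = (\<integral>x. f (t + c *\<^sub>R x) \<partial>lborel)"
proof -
  have "(\<integral>x. f x \<partial>lborel) = (\<integral>x. f x \<partial>distr lborel borel (\<lambda>x. t + c *\<^sub>R x))"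
    by (simp add: lborel_affine1[OF c])
  also have "\<dots> = (\<integral>x. f (t + c *\<^sub>R x) \<partial>lborel)"
    by (rule integral_distr) (use f in auto)
  finally show ?thesis .
qed

lemma integrable_lborel_affine1:
  fixes f :: "'a::euclidean_space \<Rightarrow> 'b::{banach,second_countable_topology}"
  assumes f: "f \<in> borel_measurable borel" and c: "c = 1 \<or> c = -1"
  shows "integrable lborel (\<lambda>x. f (t + c *\<^sub>R x)) \<longleftrightarrow> integrable lborel f"
proof -
  have "integrable lborel f \<longleftrightarrow> integrable (distr lborel borel (\<lambda>x. t + c *\<^sub>R x)) f"
    by (simp add: lborel_affine1[OF c])
  also have "\<dots> \<longleftrightarrow> integrable lborel (\<lambda>x. f (t + c *\<^sub>R x))"
    by (rule integrable_distr_eq) (use f in auto)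
  finally show ?thesis by simp
qed

lemma pos_def_facts:
  fixes S :: "real^'n^'n"
  assumes "pos_def S"
  shows "S ** matrix_inv S = mat 1" "matrix_inv S ** S = mat 1"
    "transpose (matrix_inv S) = matrix_inv S" "\<And>v. 0 \<le> v \<bullet> (matrix_inv S *v v)" "det S > 0"
proof -
  have pd: "\<And>v. v \<noteq> 0 \<Longrightarrow> v \<bullet> (S *v v) > 0" and tS: "transpose S = S"
    using assms unfolding pos_def_def by auto
  show dS: "det S > 0" by (rule posdef_det_pos) (use pd in auto)
  then have "invertible S" by (simp add: invertible_det_nz)
  then have "\<exists>A'. S ** A' = mat 1 \<and> A' ** S = mat 1" unfolding invertible_def .
  then have inv: "S ** matrix_inv S = mat 1 \<and> matrix_inv S ** S = mat 1"
    unfolding matrix_inv_def by (rule someI_ex)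
  then show SQ: "S ** matrix_inv S = mat 1" and QS: "matrix_inv S ** S = mat 1" by auto
  have "transpose (matrix_inv S) ** S = mat 1"
    using arg_cong[OF SQ, of transpose] by (simp add: matrix_transpose_mul tS transpose_mat)
  then have "transpose (matrix_inv S) = transpose (matrix_inv S) ** (S ** matrix_inv S)"
    by (simp add: SQ)
  also have "\<dots> = matrix_inv S"
    by (simp add: matrix_mul_assoc \<open>transpose (matrix_inv S) ** S = mat 1\<close>)
  finally show "transpose (matrix_inv S) = matrix_inv S" .
  fix v :: "real^'n"
  define w where "w = matrix_inv S *v v"
  have "S *v w = v" by (simp add: w_def matrix_vector_mul_assoc SQ)
  then have "v \<bullet> (matrix_inv S *v v) = w \<bullet> (S *v w)"
    by (simp add: w_def inner_commute)
  also have "\<dots> \<ge> 0" using pd[of w] by (cases "w = 0") auto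
  finally show "0 \<le> v \<bullet> (matrix_inv S *v v)" .
qed

lemma inner_sym_matrix:
  fixes Q :: "real^'n^'n"
  assumes "transpose Q = Q"
  shows "x \<bullet> (Q *v y) = (Q *v x) \<bullet> y"
proof -
  have "x \<bullet> (Q *v y) = (x v* Q) \<bullet> y" by (simp add: dot_lmul_matrix)
  also have "x v* Q = transpose Q *v x" by simp
  finally show ?thesis using assms by simp
qed

lemma matrix_vector_mult_minus_distrib:
  fixes A :: "real^'m^'n"
  shows "A *v (- x) = - (A *v x)"
  by (metis diff_0 matrix_vector_mult_diff_distrib matrix_vector_mult_0_right)

lemma gauss_center:
  fixes Q :: "real^'n^'n"
  assumes sg: "sg > 0" and psd: "\<And>v. 0 \<le> v \<bullet> (Q *v v)"
  defines "G \<equiv> (\<lambda>u. exp (- (u \<bullet> (Q *v u) + norm u ^ 2 / sg^2) / 2))"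
  shows "integrable lborel G" "integrable lborel (\<lambda>u. G u *\<^sub>R u)"
    "(\<integral>u. G u \<partial>lborel) > 0" "(\<integral>u. G u *\<^sub>R u \<partial>lborel) = 0"
proof -
  have Gm[measurable]: "G \<in> borel_measurable borel"
    unfolding G_def using sg by (intro borel_measurable_continuous_onI continuous_intros linear_continuous_on matrix_vector_mul_linear) auto
  have G0: "\<And>u. 0 \<le> G u" unfolding G_def by simp
  have Gb: "G u \<le> exp (- (norm u ^ 2) / (2 * sg^2))" for u
    unfolding G_def using psd[of u] sg by (simp add: field_simps)
  show I1: "integrable lborel G" and I2: "integrable lborel (\<lambda>u. G u *\<^sub>R u)"
    using gauss_bound_integrable[OF sg Gm G0 Gb] by auto
  have "(\<integral>u. G u \<partial>lborel) \<noteq> 0"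
  proof
    assume "(\<integral>u. G u \<partial>lborel) = 0"
    then have "AE x in lborel. G x = 0"
      using integral_nonneg_eq_0_iff_AE[OF I1] G0 by auto
    then have "AE x in (lborel :: (real^'n) measure). False" unfolding G_def by simp
    then show False by (subst (asm) AE_iff_measurable[of UNIV]) auto
  qed
  moreover have "(\<integral>u. G u \<partial>lborel) \<ge> 0" using G0 by (simp add: integral_nonneg)
  ultimately show "(\<integral>u. G u \<partial>lborel) > 0" by simp
  have Gs: "G (-u) = G u" for u
    unfolding G_def by (simp add: matrix_vector_mult_minus_distrib)
  have "(\<integral>u. G u *\<^sub>R u \<partial>lborel) = (\<integral>u. G (0 + (-1) *\<^sub>R u) *\<^sub>R (0 + (-1) *\<^sub>R u) \<partial>lborel)"
    by (rule integral_lborel_affine1) auto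
  also have "\<dots> = - (\<integral>u. G u *\<^sub>R u \<partial>lborel)"
    by (simp add: Gs)
  finally have h: "(\<integral>u. G u *\<^sub>R u \<partial>lborel) = - (\<integral>u. G u *\<^sub>R u \<partial>lborel)" .
  have "(\<integral>u. G u *\<^sub>R u \<partial>lborel) + (\<integral>u. G u *\<^sub>R u \<partial>lborel) = 0"
    by (subst (2) h) simp
  then have "(2::real) *\<^sub>R (\<integral>u. G u *\<^sub>R u \<partial>lborel) = 0" by (simp add: scaleR_2)
  then show "(\<integral>u. G u *\<^sub>R u \<partial>lborel) = 0" by simp
qed

lemma quad_identity:
  fixes Q :: "real^'n^'n" and x z m :: "real^'n"
  assumes sym: "transpose Q = Q" and sg: "sg > 0" and mz: "(sg^2) *\<^sub>R (Q *v m) + m = z"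
  shows "x \<bullet> (Q *v x) + norm (z - x) ^ 2 / sg^2
       = (x - m) \<bullet> (Q *v (x - m)) + norm (x - m) ^ 2 / sg^2
         + (norm z ^ 2 / sg^2 - m \<bullet> (Q *v m) - norm m ^ 2 / sg^2)"
proof -
  define a where "a = x \<bullet> (Q *v m)"
  have mQx: "m \<bullet> (Q *v x) = a"
    unfolding a_def using inner_sym_matrix[OF sym, of m x] by (simp add: inner_commute)
  have zx: "z \<bullet> x = sg^2 * a + m \<bullet> x"
    unfolding a_def mz[symmetric] inner_add_left inner_scaleR_left by (simp add: inner_commute)
  have n1: "norm (z - x) ^ 2 = z \<bullet> z - 2 * (z \<bullet> x) + x \<bullet> x"
    by (simp add: power2_norm_eq_inner inner_diff_left inner_diff_right inner_commute)
  have n2: "norm (x - m) ^ 2 = x \<bullet> x - 2 * (m \<bullet> x) + m \<bullet> m"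
    by (simp add: power2_norm_eq_inner inner_diff_left inner_diff_right inner_commute)
  have q: "(x - m) \<bullet> (Q *v (x - m)) = x \<bullet> (Q *v x) - 2 * a + m \<bullet> (Q *v m)"
    using mQx unfolding a_def
    by (simp add: matrix_vector_mult_diff_distrib inner_diff_left inner_diff_right)
  show ?thesis
    unfolding n1 n2 q zx using sg
    by (simp add: power2_norm_eq_inner field_simps)
qed

lemma MMSE_gauss:
  fixes S :: "real^'n^'n" and z m :: "real^'n"
  assumes pd: "pos_def S" and sg: "sg > 0"
    and mz: "(sg^2) *\<^sub>R (matrix_inv S *v m) + m = z"
  shows "MMSE (gauss_density S) sg z = m"
proof -
  define Q where "Q = matrix_inv S"
  have sym: "transpose Q = Q" and psd: "\<And>v. 0 \<le> v \<bullet> (Q *v v)" and dS: "det S > 0"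
    using pos_def_facts[OF pd] unfolding Q_def by auto
  define G where "G = (\<lambda>u::real^'n. exp (- (u \<bullet> (Q *v u) + norm u ^ 2 / sg^2) / 2))"
  have I1: "integrable lborel G" and I2: "integrable lborel (\<lambda>u. G u *\<^sub>R u)"
    and Ipos: "(\<integral>u. G u \<partial>lborel) > 0" and Izero: "(\<integral>u. G u *\<^sub>R u \<partial>lborel) = 0"
    using gauss_center[OF sg psd] unfolding G_def by auto
  have Gm[measurable]: "G \<in> borel_measurable borel"
    unfolding G_def using sg by (intro borel_measurable_continuous_onI continuous_intros linear_continuous_on matrix_vector_mul_linear) auto
  define c1 where "c1 = sqrt ((2 * pi) ^ CARD('n) * det S)"
  define c2 where "c2 = sqrt ((2 * pi * sg ^ 2) ^ CARD('n))"
  have c1: "c1 > 0" unfolding c1_def using dS by simp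
  have c2: "c2 > 0" unfolding c2_def using sg by simp
  define K where "K = exp (- (norm z ^ 2 / sg^2 - m \<bullet> (Q *v m) - norm m ^ 2 / sg^2) / 2) / (c1 * c2)"
  have K: "K > 0" unfolding K_def using c1 c2 by simp
  have w: "gauss_density S x * noise_density sg (z - x) = K * G (x - m)" for x
  proof -
    have e: "- (x \<bullet> (Q *v x)) / 2 + - (norm (z - x) ^ 2 / (2 * sg ^ 2))
       = - (norm z ^ 2 / sg^2 - m \<bullet> (Q *v m) - norm m ^ 2 / sg^2) / 2
         + - ((x - m) \<bullet> (Q *v (x - m)) + norm (x - m) ^ 2 / sg^2) / 2"
      using quad_identity[OF sym sg mz[folded Q_def], of x] by (simp add: field_simps)
    have "gauss_density S x * noise_density sg (z - x)
        = exp (- (x \<bullet> (Q *v x)) / 2 + - (norm (z - x) ^ 2 / (2 * sg ^ 2))) / (c1 * c2)"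
      unfolding gauss_density_def noise_density_def c1_def c2_def Q_def by (simp add: exp_add[symmetric])
    also have "\<dots> = K * G (x - m)"
      unfolding e K_def G_def by (simp add: exp_add)
    finally show ?thesis .
  qed
  have J1: "(\<integral>x. gauss_density S x * noise_density sg (z - x) \<partial>lborel) = K * (\<integral>u. G u \<partial>lborel)"
  proof -
    have "(\<integral>x. gauss_density S x * noise_density sg (z - x) \<partial>lborel) = (\<integral>x. K * G (x - m) \<partial>lborel)"
      by (simp add: w)
    also have "\<dots> = K * (\<integral>x. G (x - m) \<partial>lborel)" by simp
    also have "(\<integral>x. G (x - m) \<partial>lborel) = (\<integral>x. G ((m + 1 *\<^sub>R x) - m) \<partial>lborel)"
      by (rule integral_lborel_affine1[where f="\<lambda>x. G (x - m)"]) auto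
    finally show ?thesis by simp
  qed
  have J2: "(\<integral>x. (gauss_density S x * noise_density sg (z - x)) *\<^sub>R x \<partial>lborel)
      = (K * (\<integral>u. G u \<partial>lborel)) *\<^sub>R m"
  proof -
    have "(\<integral>x. (gauss_density S x * noise_density sg (z - x)) *\<^sub>R x \<partial>lborel)
        = (\<integral>x. (K * G (x - m)) *\<^sub>R x \<partial>lborel)"
      by (simp add: w)
    also have "\<dots> = K *\<^sub>R (\<integral>x. G (x - m) *\<^sub>R x \<partial>lborel)"
      by (subst integral_scaleR_right[symmetric]) simp
    also have "(\<integral>x. G (x - m) *\<^sub>R x \<partial>lborel) = (\<integral>x. G ((m + 1 *\<^sub>R x) - m) *\<^sub>R (m + 1 *\<^sub>R x) \<partial>lborel)"
      by (rule integral_lborel_affine1[where f="\<lambda>x. G (x - m) *\<^sub>R x"]) auto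
    also have "\<dots> = (\<integral>x. G x *\<^sub>R m + G x *\<^sub>R x \<partial>lborel)"
      by (simp add: scaleR_add_right)
    also have "\<dots> = (\<integral>x. G x *\<^sub>R m \<partial>lborel) + (\<integral>x. G x *\<^sub>R x \<partial>lborel)"
      by (rule Bochner_Integration.integral_add) (use I1 I2 in auto)
    also have "\<dots> = (\<integral>u. G u \<partial>lborel) *\<^sub>R m" using Izero I1 by simp
    finally show ?thesis by simp
  qed
  show ?thesis
    unfolding MMSE_def J1 J2 using K Ipos by simp
qed

lemma prox_gauss:
  fixes S :: "real^'n^'n" and y P :: "real^'n"
  assumes pd: "pos_def S" and tau: "\<tau> > 0"
    and P: "\<tau> *\<^sub>R (matrix_inv S *v P) + P = y"
  shows "prox_neg_log \<tau> (gauss_density S) y = P"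
proof -
  define Q where "Q = matrix_inv S"
  have sym: "transpose Q = Q" and psd: "\<And>v. 0 \<le> v \<bullet> (Q *v v)" and dS: "det S > 0"
    using pos_def_facts[OF pd] unfolding Q_def by auto
  define c1 where "c1 = sqrt ((2 * pi) ^ CARD('n) * det S)"
  have c1: "c1 > 0" unfolding c1_def using dS by simp
  define F where "F x = (norm (y - x))^2 / 2 - \<tau> * ln (gauss_density S x)" for x
  have lnp: "ln (gauss_density S x) = - (x \<bullet> (Q *v x)) / 2 - ln c1" for x
    unfolding gauss_density_def Q_def[symmetric] c1_def[symmetric] using c1 by (simp add: ln_div)
  have Fx: "F x = F P + (norm (x - P))^2 / 2 + \<tau> / 2 * ((x - P) \<bullet> (Q *v (x - P)))" for x
  proof -
    define d where "d = x - P"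
    have xd: "x = P + d" unfolding d_def by simp
    have yP: "y - P = \<tau> *\<^sub>R (Q *v P)" using P unfolding Q_def by (auto simp: algebra_simps)
    have s1: "d \<bullet> (Q *v P) = P \<bullet> (Q *v d)"
      using inner_sym_matrix[OF sym, of P d] by (simp add: inner_commute)
    have n1: "(norm (y - x))^2 = (norm (y - P))^2 - 2 * ((y - P) \<bullet> d) + d \<bullet> d"
      unfolding xd by (simp add: power2_norm_eq_inner inner_diff_left inner_diff_right inner_add_left inner_add_right inner_commute algebra_simps)
    have q1: "x \<bullet> (Q *v x) = P \<bullet> (Q *v P) + 2 * (d \<bullet> (Q *v P)) + d \<bullet> (Q *v d)"
      unfolding xd using s1 by (simp add: matrix_vector_right_distrib inner_add_left inner_add_right)
    have h: "(y - P) \<bullet> d = \<tau> * (d \<bullet> (Q *v P))" unfolding yP by (simp add: inner_commute)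
    have nd: "(norm d)^2 = d \<bullet> d" by (simp add: power2_norm_eq_inner)
    show ?thesis
      unfolding F_def lnp n1 q1 unfolding d_def[symmetric] nd h
      by (simp add: field_simps)
  qed
  have ge: "F P \<le> F x" for x
    using Fx[of x] psd[of "x - P"] tau by (smt (verit) mult_nonneg_nonneg zero_le_power2 divide_nonneg_pos)
  show ?thesis
    unfolding prox_neg_log_def
  proof (rule the_equality)
    show "\<forall>x'. (norm (y - P))\<^sup>2 / 2 - \<tau> * ln (gauss_density S P) \<le> (norm (y - x'))\<^sup>2 / 2 - \<tau> * ln (gauss_density S x')"
      using ge unfolding F_def by auto
  next
    fix x assume "\<forall>x'. (norm (y - x))\<^sup>2 / 2 - \<tau> * ln (gauss_density S x) \<le> (norm (y - x'))\<^sup>2 / 2 - \<tau> * ln (gauss_density S x')"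
    then have "F x \<le> F P" unfolding F_def by auto
    then have "(norm (x - P))^2 / 2 + \<tau> / 2 * ((x - P) \<bullet> (Q *v (x - P))) \<le> 0"
      using Fx[of x] by simp
    moreover have "0 \<le> \<tau> / 2 * ((x - P) \<bullet> (Q *v (x - P)))"
      using psd[of "x - P"] tau by simp
    ultimately have "(norm (x - P))^2 \<le> 0" by linarith
    then show "x = P" by simp
  qed
qed

theorem proposition5:
  fixes S :: "real^'n^'n" and \<tau> :: real and y :: "real^'n" and x :: "nat \<Rightarrow> real^'n"
  assumes "pos_def S"
    and "\<tau> > 0"
    and "x 0 = y"
    and "\<And>k. x (Suc k) =
            (real (k + 1) / real (k + 2)) *\<^sub>R MMSE (gauss_density S) (sqrt (\<tau> / real (k + 1))) (x k)
            + (1 - real (k + 1) / real (k + 2)) *\<^sub>R y"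
  shows "\<forall>k. x k - prox_neg_log \<tau> (gauss_density S) y
             = (1 / real (k + 1)) *\<^sub>R (y - prox_neg_log \<tau> (gauss_density S) y)"
proof -
  note pd = assms(1) and tau = assms(2) and x0 = assms(3) and xs = assms(4)
  define Q where "Q = matrix_inv S"
  have psd: "\<And>v. 0 \<le> v \<bullet> (Q *v v)"
    using pos_def_facts[OF pd] unfolding Q_def by auto
  define M where "M = \<tau> *\<^sub>R Q + mat 1"
  have Mv: "M *v v = \<tau> *\<^sub>R (Q *v v) + v" for v
    by (simp add: M_def matrix_vector_mult_add_rdistrib scaleR_matrix_vector_mult)
  have "det M \<noteq> 0"
  proof (rule posdef_det_nz)
    fix v :: "real^'n" assume v: "v \<noteq> 0"
    have "v \<bullet> (M *v v) = \<tau> * (v \<bullet> (Q *v v)) + v \<bullet> v" by (simp add: Mv inner_add_right)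
    moreover have "0 \<le> \<tau> * (v \<bullet> (Q *v v))" using psd[of v] tau by simp
    moreover have "v \<bullet> v > 0" using v by simp
    ultimately show "v \<bullet> (M *v v) > 0" by linarith
  qed
  then have "invertible M" by (simp add: invertible_det_nz)
  then obtain B where MB: "M ** B = mat 1" using invertible_right_inverse by blast
  define P where "P = B *v y"
  have "M *v P = y" unfolding P_def by (simp add: matrix_vector_mul_assoc MB)
  then have P: "\<tau> *\<^sub>R (Q *v P) + P = y" by (simp add: Mv)
  have prox: "prox_neg_log \<tau> (gauss_density S) y = P"
    by (rule prox_gauss[OF pd tau]) (use P in \<open>simp add: Q_def\<close>)
  have xk: "x k = P + (1 / real (k + 1)) *\<^sub>R (y - P)" for k
  proof (induction k)
    case 0
    then show ?case using x0 by simp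
  next
    case (Suc k)
    have sg: "sqrt (\<tau> / real (k + 1)) > 0" using tau by simp
    have sg2: "(sqrt (\<tau> / real (k + 1)))^2 = \<tau> / real (k + 1)" using tau by simp
    have yP: "y - P = \<tau> *\<^sub>R (Q *v P)" using P by (auto simp: algebra_simps)
    have "(sqrt (\<tau> / real (k + 1)))^2 *\<^sub>R (matrix_inv S *v P) + P = x k"
      unfolding Suc sg2 yP Q_def[symmetric] by (simp add: algebra_simps)
    then have mm: "MMSE (gauss_density S) (sqrt (\<tau> / real (k + 1))) (x k) = P"
      by (rule MMSE_gauss[OF pd sg])
    have c: "1 - real (k + 1) / real (k + 2) = 1 / real (Suc k + 1)"
      by (simp add: field_simps)
    have e: "(1 / (real k + 2)) *\<^sub>R P + ((1 + real k) / (real k + 2)) *\<^sub>R P = P"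
    proof -
      have "1 / (real k + 2) + (1 + real k) / (real k + 2) = 1" by (simp add: field_simps)
      then show ?thesis by (metis scaleR_add_left scaleR_one)
    qed
    show ?case
      unfolding xs mm c using e by (simp add: algebra_simps)
  qed
  show ?thesis unfolding prox using xk by simp
qed

end
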